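(* Let $n\geq 0$ and $0\leq l\leq n$ be integers. Then \[ \sum_{k=1}^{n}{n\brack k}\frac{(q/z;q)_k (zq^{-l};q)_{n-k}}{1-q^k} z^k =(zq^{-l};q)_n\left(\sum_{k=1}^{n-l}\frac{zq^{k-1}}{1-zq^{k-1}}-\sum_{k=1}^n\frac{q^k}{1-q^k}\right). \]
   Context: For $N\geq 0$, $(x;q)_N=(1-x)(1-xq)\cdots(1-xq^{N-1})$ (with $(x;q)_0=1$). The $q$-binomial coefficient is ${n\brack k}=\frac{(q;q)_n}{(q;q)_k(q;q)_{n-k}}$ for $0\leq k\leq n$ and $0$ otherwise. The identity is one of rational functions in $q$ and $z$. *)

theory Defs
  imports Complex_Main
begin

definition qpoch :: "'a::field \<Rightarrow> 'a \<Rightarrow> nat \<Rightarrow> 'a" where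
  "qpoch x q N = (\<Prod>i<N. 1 - x * q ^ i)"

definition qbinom :: "'a::field \<Rightarrow> nat \<Rightarrow> nat \<Rightarrow> 'a" where
  "qbinom q n k = (if k \<le> n then qpoch q q n / (qpoch q q k * qpoch q q (n - k)) else 0)"

end

theory Submission
  imports Defs
begin

lemma qpoch_0[simp]: "qpoch x q 0 = 1" by (simp add: qpoch_def)
lemma qpoch_Suc: "qpoch x q (Suc m) = qpoch x q m * (1 - x*q^m)"
  by (simp add: qpoch_def)
lemma qpoch_Suc': "qpoch x q (Suc m) = (1 - x) * qpoch (x*q) q m"
  unfolding qpoch_def prod.lessThan_Suc_shift by (simp add: ac_simps)
lemma qpoch_shift: "qpoch w q m = qpoch (w*q) q m - w*(1 - q^m)*qpoch (w*q) q (m-1)"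
proof (cases m)
  case 0 then show ?thesis by simp
next
  case (Suc m')
  have a: "qpoch w q m = (1 - w) * qpoch (w*q) q m'" unfolding Suc qpoch_Suc' ..
  have b: "qpoch (w*q) q m = qpoch (w*q) q m' * (1 - w*q*q^m')" unfolding Suc qpoch_Suc ..
  show ?thesis unfolding a b using Suc by (simp add: algebra_simps)
qed

lemma qb_0: "qpoch q q n \<noteq> 0 \<Longrightarrow> qbinom q n 0 = 1"
  by (simp add: qbinom_def)
lemma qb_nn: "qpoch q q n \<noteq> 0 \<Longrightarrow> qbinom q n n = 1"
  by (simp add: qbinom_def)
lemma qb_gt: "n < k \<Longrightarrow> qbinom q n k = 0"
  by (simp add: qbinom_def)

lemma alg0:
  fixes Qk Qr Qn u v :: "'a::field"
  assumes "Qk \<noteq> 0" "Qr \<noteq> 0" "u \<noteq> 0" "v \<noteq> 0"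
  shows "Qn*(u + (1-u)*v)/(Qk*u*(Qr*v)) = Qn/(Qk*(Qr*v)) + (1-u)*(Qn/(Qk*u*Qr))"
  using assms by (simp add: field_simps)

lemma alg1:
  fixes Qk Qr Qn x y X :: "'a::field"
  assumes "Qk \<noteq> 0" "Qr \<noteq> 0" "1 - x \<noteq> 0" "1 - y \<noteq> 0" "X = x*y"
  shows "Qn*(1-X)/(Qk*(1-x)*(Qr*(1-y))) = Qn/(Qk*(Qr*(1-y))) + x*(Qn/(Qk*(1-x)*Qr))"
proof -
  have e: "1 - X = (1-x) + (1-(1-x))*(1-y)" using assms by (simp add: algebra_simps)
  show ?thesis unfolding e using alg0[OF assms(1-4), of Qn] by simp
qed

lemma P1:
  fixes q :: "'a::field"
  assumes nz: "\<And>m. m \<le> Suc n \<Longrightarrow> qpoch q q m \<noteq> 0"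
  shows "qbinom q (Suc n) (Suc k) = qbinom q n k + q^(Suc k) * qbinom q n (Suc k)"
proof -
  consider "n < k" | "k = n" | "k < n" by linarith
  then show ?thesis
  proof cases
    case 1 then show ?thesis by (simp add: qb_gt)
  next
    case 2 then show ?thesis using nz by (simp add: qb_nn qb_gt)
  next
    case 3
    have e1: "n - k = Suc (n - Suc k)" using 3 by simp
    have Q1: "qpoch q q (Suc k) = qpoch q q k * (1 - q^(Suc k))" by (simp add: qpoch_Suc)
    have Q2: "qpoch q q (n - k) = qpoch q q (n - Suc k) * (1 - q^(n-k))"
      unfolding e1 qpoch_Suc by simp
    have Q3: "qpoch q q (Suc n) = qpoch q q n * (1 - q^(Suc n))" by (simp add: qpoch_Suc)
    have pw: "q^(Suc n) = q^(Suc k) * q^(n-k)" using 3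
      by (metis Suc_leI le_add_diff_inverse power_add Suc_diff_le less_imp_le_nat plus_1_eq_Suc add_Suc)
    have nzk: "qpoch q q k \<noteq> 0" "qpoch q q (Suc k) \<noteq> 0" "qpoch q q (n - k) \<noteq> 0"
      "qpoch q q (n - Suc k) \<noteq> 0" "qpoch q q n \<noteq> 0" using nz 3 by auto
    have f1: "1 - q^(Suc k) \<noteq> 0" using nzk Q1 by auto
    have f2: "1 - q^(n-k) \<noteq> 0" using nzk Q2 by auto
    have A: "qbinom q (Suc n) (Suc k) = qpoch q q (Suc n) / (qpoch q q (Suc k) * qpoch q q (n - k))"
      using 3 by (simp add: qbinom_def)
    have B: "qbinom q n k = qpoch q q n / (qpoch q q k * qpoch q q (n - k))"
      using 3 by (simp add: qbinom_def)
    have C: "qbinom q n (Suc k) = qpoch q q n / (qpoch q q (Suc k) * qpoch q q (n - Suc k))"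
      using 3 by (simp add: qbinom_def)
    show ?thesis
      unfolding A B C Q3 Q1 Q2 using alg1[OF nzk(1) nzk(4) f1 f2 pw] by simp
  qed
qed

lemma P3:
  fixes q :: "'a::field"
  assumes nz: "\<And>m. m \<le> Suc n \<Longrightarrow> qpoch q q m \<noteq> 0" and k: "k \<le> Suc n"
  shows "qbinom q n k * (1 - q^(Suc n)) = qbinom q (Suc n) k * (1 - q^(Suc n - k))"
proof (cases "k = Suc n")
  case True then show ?thesis by (simp add: qb_gt)
next
  case False
  then have kn: "k \<le> n" using k by simp
  have e1: "Suc n - k = Suc (n - k)" using kn by simp
  have Q2: "qpoch q q (Suc n - k) = qpoch q q (n - k) * (1 - q^(Suc n - k))"
    unfolding e1 qpoch_Suc by simp
  have Q3: "qpoch q q (Suc n) = qpoch q q n * (1 - q^(Suc n))" by (simp add: qpoch_Suc)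
  have nzk: "qpoch q q k \<noteq> 0" "qpoch q q (n - k) \<noteq> 0" "qpoch q q (Suc n - k) \<noteq> 0"
    using nz kn by auto
  have f: "1 - q^(Suc n - k) \<noteq> 0" using nzk(3) Q2 by auto
  have A: "qbinom q n k = qpoch q q n / (qpoch q q k * qpoch q q (n - k))"
    using kn by (simp add: qbinom_def)
  have B: "qbinom q (Suc n) k = qpoch q q (Suc n) / (qpoch q q k * qpoch q q (Suc n - k))"
    using kn by (simp add: qbinom_def)
  show ?thesis unfolding A B Q2 Q3 using nzk f by (simp add: field_simps)
qed

lemma V:
  fixes a b c q :: "'a::field"
  assumes ac: "a * c = 1" and nz: "\<And>m. m \<le> n \<Longrightarrow> qpoch q q m \<noteq> 0"
  shows "(\<Sum>k\<le>n. qbinom q n k * qpoch a q k * qpoch b q (n - k) * c^k) = (\<Prod>m<n. c - b*q^m)"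
  using nz
proof (induction n)
  case 0 then show ?case by (simp add: qb_0)
next
  case (Suc n)
  have nz': "\<And>m. m \<le> n \<Longrightarrow> qpoch q q m \<noteq> 0" using Suc.prems by simp
  define Y where "Y k = qpoch a q k * qpoch b q (Suc n - k) * c^k" for k
  have pas: "qbinom q (Suc n) k = (if k = 0 then 0 else qbinom q n (k - 1)) + q^k * qbinom q n k" for k
  proof (cases k)
    case 0 then show ?thesis using Suc.prems nz' by (simp add: qb_0)
  next
    case (Suc k') then show ?thesis using P1[of n q k'] Suc.prems by simp
  qed
  have "(\<Sum>k\<le>Suc n. qbinom q (Suc n) k * Y k)
      = (\<Sum>k\<le>Suc n. (if k = 0 then 0 else qbinom q n (k - 1)) * Y k) + (\<Sum>k\<le>Suc n. q^k * qbinom q n k * Y k)"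
    unfolding pas by (simp add: sum.distrib algebra_simps)
  also have "(\<Sum>k\<le>Suc n. (if k = 0 then 0 else qbinom q n (k - 1)) * Y k) = (\<Sum>k\<le>n. qbinom q n k * Y (Suc k))"
    unfolding sum.atMost_Suc_shift by simp
  also have "(\<Sum>k\<le>Suc n. q^k * qbinom q n k * Y k) = (\<Sum>k\<le>n. q^k * qbinom q n k * Y k)"
    by (simp add: qb_gt)
  also have "(\<Sum>k\<le>n. qbinom q n k * Y (Suc k)) + (\<Sum>k\<le>n. q^k * qbinom q n k * Y k)
      = (\<Sum>k\<le>n. (qbinom q n k * qpoch a q k * qpoch b q (n - k) * c^k) * (c - b*q^n))"
    unfolding sum.distrib[symmetric]
  proof (rule sum.cong[OF refl])
    fix k assume "k \<in> {..n}"
    then have kn: "k \<le> n" by simp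
    have e: "Suc n - k = Suc (n - k)" using kn by simp
    have pw: "q^k * q^(n-k) = q^n" using kn by (simp add: power_add[symmetric])
    have y1: "Y (Suc k) = qpoch a q k * (1 - a*q^k) * qpoch b q (n - k) * c^Suc k"
      unfolding Y_def qpoch_Suc by simp
    have y2: "Y k = qpoch a q k * (qpoch b q (n - k) * (1 - b*q^(n-k))) * c^k"
      unfolding Y_def e qpoch_Suc by simp
    have f: "c*(1-a*q^k) + q^k*(1 - b*q^(n-k)) = c - b*q^n"
      using ac pw by (simp add: algebra_simps)
    have "qbinom q n k * Y (Suc k) + q^k * qbinom q n k * Y k
      = (qbinom q n k * qpoch a q k * qpoch b q (n - k) * c^k) * (c*(1-a*q^k) + q^k*(1 - b*q^(n-k)))"
      unfolding y1 y2 by (simp add: algebra_simps)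
    then show "qbinom q n k * Y (Suc k) + q^k * qbinom q n k * Y k
      = (qbinom q n k * qpoch a q k * qpoch b q (n - k) * c^k) * (c - b*q^n)"
      unfolding f .
  qed
  also have "\<dots> = (\<Prod>m<Suc n. c - b*q^m)"
    using Suc.IH[OF nz'] by (simp add: sum_distrib_right[symmetric])
  finally show ?case unfolding Y_def by (simp add: mult.assoc)
qed

definition Fs :: "complex \<Rightarrow> complex \<Rightarrow> nat \<Rightarrow> complex \<Rightarrow> complex" where
  "Fs q z n w = (\<Sum>k = 1..n. qbinom q n k * qpoch (q / z) q k * qpoch w q (n - k) / (1 - q ^ k) * z ^ k)"

lemma Fs_ext: "Fs q z n w = (\<Sum>k = 1..Suc n. qbinom q n k * qpoch (q / z) q k * qpoch w q (n - k) / (1 - q ^ k) * z ^ k)"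
  unfolding Fs_def by (simp add: qb_gt)

lemma Rb:
  assumes nz: "\<And>m. m \<le> Suc n \<Longrightarrow> qpoch q q m \<noteq> 0"
  shows "Fs q z (Suc n) w = Fs q z (Suc n) (w*q) - w*(1 - q^(Suc n))*Fs q z n (w*q)"
proof -
  have "Fs q z (Suc n) (w*q) - w*(1 - q^(Suc n))*Fs q z n (w*q)
     = (\<Sum>k = 1..Suc n. qbinom q (Suc n) k * qpoch (q / z) q k * qpoch (w*q) q (Suc n - k) / (1 - q ^ k) * z ^ k
         - w*(1 - q^(Suc n))*(qbinom q n k * qpoch (q / z) q k * qpoch (w*q) q (n - k) / (1 - q ^ k) * z ^ k))"
    unfolding Fs_ext[of q z n "w*q"] Fs_def[of q z "Suc n"] by (simp only: sum_subtractf sum_distrib_left)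
  also have "\<dots> = Fs q z (Suc n) w"
    unfolding Fs_def
  proof (rule sum.cong[OF refl])
    fix k assume "k \<in> {1..Suc n}"
    then have k: "k \<le> Suc n" by simp
    have p3: "qbinom q n k * (1 - q^(Suc n)) = qbinom q (Suc n) k * (1 - q^(Suc n - k))"
      using P3[OF nz k] by simp
    have e: "Suc n - k - 1 = n - k" by simp
    have sh: "qpoch w q (Suc n - k) = qpoch (w*q) q (Suc n - k) - w*(1 - q^(Suc n - k))*qpoch (w*q) q (n - k)"
      using qpoch_shift[of w q "Suc n - k"] unfolding e .
    define A where "A = qpoch (q / z) q k / (1 - q ^ k) * z ^ k"
    have "qbinom q (Suc n) k * qpoch (q / z) q k * qpoch (w*q) q (Suc n - k) / (1 - q ^ k) * z ^ k
         - w*(1 - q^(Suc n))*(qbinom q n k * qpoch (q / z) q k * qpoch (w*q) q (n - k) / (1 - q ^ k) * z ^ k)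
       = qbinom q (Suc n) k * qpoch (w*q) q (Suc n - k) * A - w*(qbinom q n k * (1 - q^(Suc n)))*qpoch (w*q) q (n - k) * A"
      unfolding A_def by (simp add: divide_inverse algebra_simps)
    also have "\<dots> = qbinom q (Suc n) k * qpoch w q (Suc n - k) * A"
      unfolding p3 sh by (simp add: algebra_simps)
    also have "\<dots> = qbinom q (Suc n) k * qpoch (q / z) q k * qpoch w q (Suc n - k) / (1 - q ^ k) * z ^ k"
      unfolding A_def by (simp add: divide_inverse algebra_simps)
    finally show "qbinom q (Suc n) k * qpoch (q / z) q k * qpoch (w*q) q (Suc n - k) / (1 - q ^ k) * z ^ k
         - w*(1 - q^(Suc n))*(qbinom q n k * qpoch (q / z) q k * qpoch (w*q) q (n - k) / (1 - q ^ k) * z ^ k)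
       = qbinom q (Suc n) k * qpoch (q / z) q k * qpoch w q (Suc n - k) / (1 - q ^ k) * z ^ k" .
  qed
  finally show ?thesis by simp
qed

lemma alg2:
  fixes X s t :: complex
  assumes "1 - s \<noteq> 0" "1 - s*t \<noteq> 0"
  shows "X*s/(1-s) - X*((1-t)/(1-s*t))*s/(1-s) = s*t/(1-s*t)*X"
proof -
  have g: "u \<noteq> 0 \<Longrightarrow> v \<noteq> 0 \<Longrightarrow> X*s/u - X*(r/v)*s/u = X*s*(v - r)/(u*v)" for u v r :: complex
    by (simp add: field_simps)
  have e: "(1 - s*t) - (1 - t) = t*(1-s)" by (simp add: algebra_simps)
  have g2: "u \<noteq> 0 \<Longrightarrow> v \<noteq> 0 \<Longrightarrow> X*s*(t*u)/(u*v) = s*t/v*X" for u v :: complex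
    by (simp add: field_simps)
  show ?thesis unfolding g[OF assms] e g2[OF assms] ..
qed

lemma II:
  assumes nz: "\<And>m. m \<le> Suc n \<Longrightarrow> qpoch q q m \<noteq> 0" and z: "z \<noteq> 0" and q: "q \<noteq> 0"
    and wc: "w*q^n = z/q"
  shows "Fs q z (Suc n) w = (1-w)*Fs q z n (w*q) - q^(Suc n)*qpoch w q (Suc n)/(1 - q^(Suc n))"
proof -
  define a where "a = q/z"
  define c where "c = z/q"
  have ac: "a*c = 1" using z q unfolding a_def c_def by simp
  have zc: "z = c*q" using q unfolding c_def by simp
  have QN: "qpoch q q (Suc n) = qpoch q q n * (1 - q^(Suc n))" by (simp add: qpoch_Suc)
  have fN: "1 - q^(Suc n) \<noteq> 0" using nz[of "Suc n"] QN by auto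
  have "(\<Sum>k\<le>Suc n. qbinom q (Suc n) k * qpoch a q k * qpoch w q (Suc n - k) * c^k) = (\<Prod>m<Suc n. c - w*q^m)"
    using V[OF ac nz] by blast
  also have "\<dots> = 0"
    using wc unfolding c_def by (intro prod_zero) (auto intro!: bexI[where x=n])
  finally have V0: "(\<Sum>k\<le>Suc n. qbinom q (Suc n) k * qpoch a q k * qpoch w q (Suc n - k) * c^k) = 0" .
  have S1: "(\<Sum>k=1..Suc n. qbinom q (Suc n) k * qpoch a q k * qpoch w q (Suc n - k) * c^k) = - qpoch w q (Suc n)"
    using V0 nz[of "Suc n"] unfolding atMost_atLeast0 sum.atLeast_Suc_atMost[of 0 "Suc n", OF le0]
    by (simp add: qb_0 add_eq_0_iff)
  have "Fs q z (Suc n) w - (1-w)*Fs q z n (w*q)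
     = (\<Sum>k = 1..Suc n. qbinom q (Suc n) k * qpoch (q / z) q k * qpoch w q (Suc n - k) / (1 - q ^ k) * z ^ k
         - (1-w)*(qbinom q n k * qpoch (q / z) q k * qpoch (w*q) q (n - k) / (1 - q ^ k) * z ^ k))"
    unfolding Fs_ext[of q z n "w*q"] Fs_def[of q z "Suc n"] by (simp only: sum_subtractf sum_distrib_left)
  also have "\<dots> = (\<Sum>k = 1..Suc n. q^(Suc n)/(1 - q^(Suc n)) * (qbinom q (Suc n) k * qpoch a q k * qpoch w q (Suc n - k) * c^k))"
  proof (rule sum.cong[OF refl])
    fix k assume "k \<in> {1..Suc n}"
    then have k: "k \<le> Suc n" "1 \<le> k" by auto
    then obtain j where j: "k = Suc j" by (cases k) auto
    have fk: "1 - q^k \<noteq> 0" using nz[of k] k unfolding j qpoch_Suc by auto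
    have h1: "(1-w)*qbinom q n k*qpoch (w*q) q (n - k) = qbinom q n k * qpoch w q (Suc n - k)"
    proof (cases "k \<le> n")
      case True
      then have "Suc n - k = Suc (n - k)" by simp
      then show ?thesis by (simp add: qpoch_Suc')
    next
      case False then show ?thesis by (simp add: qb_gt)
    qed
    have h2: "qbinom q n k = qbinom q (Suc n) k * ((1 - q^(Suc n - k))/(1 - q^(Suc n)))"
      using P3[OF nz k(1)] fN by (simp add: field_simps)
    have pw: "q^k*q^(Suc n - k) = q^(Suc n)" using k by (simp add: power_add[symmetric])
    define X where "X = qbinom q (Suc n) k * qpoch a q k * qpoch w q (Suc n - k) * c^k"
    have "qbinom q (Suc n) k * qpoch (q / z) q k * qpoch w q (Suc n - k) / (1 - q ^ k) * z ^ k
         - (1-w)*(qbinom q n k * qpoch (q / z) q k * qpoch (w*q) q (n - k) / (1 - q ^ k) * z ^ k)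
        = qbinom q (Suc n) k * qpoch a q k * qpoch w q (Suc n - k) / (1 - q ^ k) * z ^ k
         - ((1-w)*qbinom q n k*qpoch (w*q) q (n - k)) * qpoch a q k / (1 - q ^ k) * z ^ k"
      unfolding a_def by (simp add: divide_inverse algebra_simps)
    also have "\<dots> = X*q^k/(1-q^k) - X*((1 - q^(Suc n - k))/(1 - q^k*q^(Suc n - k)))*q^k/(1-q^k)"
      unfolding h1 X_def pw unfolding h2 zc power_mult_distrib by (simp add: divide_inverse algebra_simps)
    also have "\<dots> = q^k*q^(Suc n - k)/(1 - q^k*q^(Suc n - k)) * X"
      by (rule alg2) (use fk fN pw in auto)
    finally show "qbinom q (Suc n) k * qpoch (q / z) q k * qpoch w q (Suc n - k) / (1 - q ^ k) * z ^ k
         - (1-w)*(qbinom q n k * qpoch (q / z) q k * qpoch (w*q) q (n - k) / (1 - q ^ k) * z ^ k)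
        = q^(Suc n)/(1 - q^(Suc n)) * (qbinom q (Suc n) k * qpoch a q k * qpoch w q (Suc n - k) * c^k)"
      unfolding pw X_def .
  qed
  also have "\<dots> = -(q^(Suc n)*qpoch w q (Suc n)/(1 - q^(Suc n)))"
    unfolding sum_distrib_left[symmetric] S1 by simp
  finally show ?thesis by (simp add: algebra_simps)
qed

definition Rs :: "complex \<Rightarrow> complex \<Rightarrow> nat \<Rightarrow> nat \<Rightarrow> complex" where
  "Rs q z n l = qpoch (z/q^l) q n * ((\<Sum>k = 1..n - l. z * q ^ (k - 1) / (1 - z * q ^ (k - 1)))
            - (\<Sum>k = 1..n. q ^ k / (1 - q ^ k)))"

lemma alg3:
  fixes P u w t A B :: complex
  assumes "1 - u \<noteq> 0" "1 - t \<noteq> 0" "u = w*t"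
  shows "P*(1-u)*(A + u/(1-u) - (B + t/(1-t))) = (1-w)*P*(A - (B + t/(1-t))) + w*(1-t)*(P*(A - B))"
proof -
  define C where "C = B + t/(1-t)"
  have c1: "(1-t)*(C - B) = t" unfolding C_def using assms(2) by simp
  have c2: "(1-u)*(u/(1-u)) = u" using assms(1) by simp
  have "P*(1-u)*(A + u/(1-u) - C) = P*(1-u)*(A - C) + P*((1-u)*(u/(1-u)))"
    by (simp add: algebra_simps)
  also have "\<dots> = P*(1-u)*(A - C) + P*u" unfolding c2 ..
  finally have L: "P*(1-u)*(A + u/(1-u) - C) = P*(1-u)*(A - C) + P*u" .
  have "w*(1-t)*(P*(A - B)) = w*(1-t)*(P*(A - C)) + w*P*((1-t)*(C - B))"
    by (simp add: algebra_simps)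
  also have "\<dots> = w*(1-t)*(P*(A - C)) + w*P*t" unfolding c1 ..
  finally have R: "w*(1-t)*(P*(A - B)) = w*(1-t)*(P*(A - C)) + w*P*t" .
  show ?thesis unfolding C_def[symmetric] L R using assms(3) by (simp add: algebra_simps)
qed

lemma main:
  assumes q: "q \<noteq> 0" and z: "z \<noteq> 0"
    and nzQ: "\<And>m. m \<le> N \<Longrightarrow> qpoch q q m \<noteq> 0"
    and nzZ: "\<And>j. j < D \<Longrightarrow> 1 - z*q^j \<noteq> 0"
  shows "n \<le> N \<Longrightarrow> l \<le> n \<Longrightarrow> n - l \<le> D \<Longrightarrow> Fs q z n (z/q^l) = Rs q z n l"
proof (induction n arbitrary: l)
  case 0 then show ?case by (simp add: Fs_def Rs_def)
next
  case (Suc n)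
  have nz: "\<And>m. m \<le> Suc n \<Longrightarrow> qpoch q q m \<noteq> 0" using nzQ Suc.prems by simp
  have QN: "qpoch q q (Suc n) = qpoch q q n * (1 - q^(Suc n))" by (simp add: qpoch_Suc)
  have fN: "1 - q^(Suc n) \<noteq> 0" using nz[of "Suc n"] QN by auto
  have BN: "(\<Sum>k = 1..Suc n. q ^ k / (1 - q ^ k)) = (\<Sum>k = 1..n. q ^ k / (1 - q ^ k)) + q^(Suc n)/(1 - q^(Suc n))"
    by simp
  note outerIH = Suc.IH
  note outerprems = Suc.prems
  have "\<forall>l. Suc n - l = d \<longrightarrow> l \<le> Suc n \<longrightarrow> d \<le> D \<longrightarrow> Fs q z (Suc n) (z/q^l) = Rs q z (Suc n) l" for d
  proof (induction d)
    case 0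
    show ?case
    proof (intro allI impI)
      fix l assume "Suc n - l = 0" "l \<le> Suc n" "0 \<le> D"
      then have l: "l = Suc n" by simp
      define w where "w = z/q^(Suc n)"
      have wq: "w*q = z/q^n" unfolding w_def using q by (simp add: field_simps)
      have wc: "w*q^n = z/q" unfolding w_def using q by (simp add: field_simps)
      have IH: "Fs q z n (z/q^n) = Rs q z n n" using Suc.IH[of n] Suc.prems by simp
      have "Fs q z (Suc n) w = (1-w)*Fs q z n (w*q) - q^(Suc n)*qpoch w q (Suc n)/(1 - q^(Suc n))"
        by (rule II[OF nz z q wc])
      also have "\<dots> = Rs q z (Suc n) (Suc n)"
      proof -
        define P where "P = qpoch (z/q^n) q n"
        define B where "B = (\<Sum>k = 1..n. q ^ k / (1 - q ^ k))"
        have R1: "Rs q z n n = P*(0 - B)" unfolding Rs_def P_def B_def by simp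
        have PN: "qpoch w q (Suc n) = (1-w)*P" unfolding qpoch_Suc' wq P_def ..
        have R2: "Rs q z (Suc n) (Suc n) = (1-w)*P*(0 - (B + q^(Suc n)/(1 - q^(Suc n))))"
          unfolding Rs_def BN w_def[symmetric] PN B_def by simp
        show ?thesis unfolding wq IH R1 R2 PN by (simp add: algebra_simps)
      qed
      finally show "Fs q z (Suc n) (z/q^l) = Rs q z (Suc n) l" unfolding l w_def .
    qed
  next
    case (Suc d)
    show ?case
    proof (intro allI impI)
      fix l assume a: "Suc n - l = Suc d" "l \<le> Suc n" "Suc d \<le> D"
      then have ln: "l \<le> n" and dl: "n - l = d" by auto
      define w where "w = z/q^(Suc l)"
      have wq: "w*q = z/q^l" unfolding w_def using q by (simp add: field_simps)
      have IH1: "Fs q z (Suc n) w = Rs q z (Suc n) (Suc l)"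
        unfolding w_def by (rule Suc.IH[rule_format, of "Suc l"]) (use a in auto)
      have IH2: "Fs q z n (z/q^l) = Rs q z n l"
        using outerIH[of l] outerprems ln dl a by simp
      have "Fs q z (Suc n) (z/q^l) = Fs q z (Suc n) w + w*(1 - q^(Suc n))*Fs q z n (z/q^l)"
        using Rb[OF nz, where z=z and w=w] unfolding wq by simp
      also have "\<dots> = Rs q z (Suc n) (Suc l) + w*(1 - q^(Suc n))*Rs q z n l"
        unfolding IH1 IH2 ..
      also have "\<dots> = Rs q z (Suc n) l"
      proof -
        define P where "P = qpoch (z/q^l) q n"
        define u where "u = z*q^(n-l)"
        define A where "A = (\<Sum>k = 1..n - l. z * q ^ (k - 1) / (1 - z * q ^ (k - 1)))"
        define B where "B = (\<Sum>k = 1..n. q ^ k / (1 - q ^ k))"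
        have u1: "1 - u \<noteq> 0" unfolding u_def using nzZ[of "n-l"] a dl by simp
        have uw: "u = w*q^(Suc n)" unfolding u_def w_def using q ln
          by (simp add: field_simps power_add[symmetric])
        have uP: "(z/q^l)*q^n = u" unfolding u_def using q ln
          by (simp add: field_simps power_add[symmetric])
        have e1: "Suc n - Suc l = n - l" "Suc n - l = Suc (n - l)" using ln by auto
        have A2: "(\<Sum>k = 1..Suc n - l. z * q ^ (k - 1) / (1 - z * q ^ (k - 1))) = A + u/(1-u)"
          unfolding e1(2) A_def u_def by simp
        have PN: "qpoch w q (Suc n) = (1-w)*P" unfolding qpoch_Suc' wq P_def ..
        have R1: "Rs q z (Suc n) (Suc l) = (1-w)*P*(A - (B + q^(Suc n)/(1 - q^(Suc n))))"
          unfolding Rs_def e1(1) BN w_def[symmetric] PN A_def B_def by simp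
        have R2: "Rs q z n l = P*(A - B)" unfolding Rs_def P_def A_def B_def ..
        have R3: "Rs q z (Suc n) l = P*(1-u)*(A + u/(1-u) - (B + q^(Suc n)/(1 - q^(Suc n))))"
          unfolding Rs_def A2 BN qpoch_Suc uP P_def B_def by (simp add: algebra_simps)
        show ?thesis unfolding R1 R2 R3 by (rule alg3[OF u1 fN uw, symmetric])
      qed
      finally show "Fs q z (Suc n) (z/q^l) = Rs q z (Suc n) l" .
    qed
  qed
  then show ?case using Suc.prems by blast
qed

theorem corollary3p2:
  fixes q z :: complex and n l :: nat
  assumes "l \<le> n"
    and "q \<noteq> 0" and "z \<noteq> 0"
    and "\<And>k. 1 \<le> k \<Longrightarrow> k \<le> n \<Longrightarrow> 1 - q ^ k \<noteq> 0"
    and "\<And>k. 1 \<le> k \<Longrightarrow> k \<le> n - l \<Longrightarrow> 1 - z * q ^ (k - 1) \<noteq> 0"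
  shows "(\<Sum>k = 1..n. qbinom q n k * qpoch (q / z) q k * qpoch (z * q powi (- int l)) q (n - k)
              / (1 - q ^ k) * z ^ k)
         = qpoch (z * q powi (- int l)) q n *
           ((\<Sum>k = 1..n - l. z * q ^ (k - 1) / (1 - z * q ^ (k - 1)))
            - (\<Sum>k = 1..n. q ^ k / (1 - q ^ k)))"
proof -
  have W: "z * q powi (- int l) = z / q^l"
    by (simp add: power_int_minus divide_inverse)
  have nzQ: "qpoch q q m \<noteq> 0" if "m \<le> n" for m
  proof -
    have "\<forall>i\<in>{..<m}. 1 - q * q^i \<noteq> 0"
      using assms(4)[of "Suc i" for i] that by auto
    then show ?thesis unfolding qpoch_def by (simp add: prod_zero_iff)
  qed
  have nzZ: "1 - z*q^j \<noteq> 0" if "j < n - l" for j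
    using assms(5)[of "Suc j"] that by simp
  have "Fs q z n (z/q^l) = Rs q z n l"
    by (rule main[OF assms(2,3) nzQ nzZ]) (use assms(1) in auto)
  then show ?thesis unfolding W Fs_def Rs_def .
qed

end
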